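(* Let $Z\sim N(0,1)$ and let $x=(x_1,\ldots,x_n)$ be a vector of i.i.d. symmetric Bernoulli random variables (taking values $\pm1$ with probability $1/2$ each). Fix $u\in S^{n-1}$ and let $X=\langle u,x\rangle$. Then for every $\sigma\in(0,1)$, $$\mathbb{E}\exp(\sigma^2X^2/2)\le\mathbb{E}\exp(\sigma^2Z^2/2)=\frac{1}{\sqrt{1-\sigma^2}}.$$ Furthermore, the sub-gaussian norm $\alpha(n):=\|x\|_{\psi_2}$ satisfies $\alpha(n)\le\sqrt{8}/\sqrt{3}$ and $\alpha(n)\to\sqrt{8}/\sqrt{3}$ as $n\to\infty$.
   Context: For a real random variable $Y$, $\|Y\|_{\psi_2}=\inf\{t>0:\mathbb{E}\exp(Y^2/t^2)\le2\}$; for a random vector $X\in\mathbb{R}^n$, $\|X\|_{\psi_2}=\sup_{u\in S^{n-1}}\|\langle X,u\rangle\|_{\psi_2}$, where $S^{n-1}$ is the unit sphere in $\mathbb{R}^n$. *)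

theory Defs
  imports "HOL-Probability.Probability"
begin

definition psi2_norm :: "'a measure \<Rightarrow> ('a \<Rightarrow> real) \<Rightarrow> real" where
  "psi2_norm M Y = Inf {t::real. t > 0 \<and> (\<integral>\<^sup>+ \<omega>. ennreal (exp ((Y \<omega>)\<^sup>2 / t\<^sup>2)) \<partial>M) \<le> 2}"

definition unit_sphere :: "nat \<Rightarrow> (nat \<Rightarrow> real) set" where
  "unit_sphere n = {u \<in> {..<n} \<rightarrow>\<^sub>E UNIV. (\<Sum>i<n. (u i)\<^sup>2) = 1}"

definition psi2_vec_norm :: "'a measure \<Rightarrow> nat \<Rightarrow> ('a \<Rightarrow> nat \<Rightarrow> real) \<Rightarrow> real" where
  "psi2_vec_norm M n X = Sup ((\<lambda>u. psi2_norm M (\<lambda>\<omega>. \<Sum>i<n. X \<omega> i * u i)) ` unit_sphere n)"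

text \<open>Sign vectors {-1,1}^n; the uniform distribution on them is the law of n i.i.d.
  symmetric Bernoulli (Rademacher) variables.\<close>
definition sign_vectors :: "nat \<Rightarrow> (nat \<Rightarrow> real) set" where
  "sign_vectors n = {..<n} \<rightarrow>\<^sub>E {-1, 1}"

definition rademacher :: "nat \<Rightarrow> (nat \<Rightarrow> real) pmf" where
  "rademacher n = pmf_of_set (sign_vectors n)"

definition alpha :: "nat \<Rightarrow> real" where
  "alpha n = psi2_vec_norm (measure_pmf (rademacher n)) n (\<lambda>x. x)"

definition std_gaussian :: "real measure" where
  "std_gaussian = density lborel (\<lambda>z. ennreal (std_normal_density z))"

end

theory Submission
  imports Defs
begin

lemma gauss_mgf:
  fixes c :: real
  shows "has_bochner_integral lborel (\<lambda>z. std_normal_density z * exp (c * z)) (exp (c\<^sup>2 / 2))"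
proof -
  have eq: "std_normal_density z * exp (c * z) = exp (c\<^sup>2 / 2) * normal_density c 1 z" for z
  proof -
    have "exp (- z\<^sup>2 / 2) * exp (c * z) = exp (c\<^sup>2 / 2) * exp (- (z - c)\<^sup>2 / 2)"
      by (simp add: exp_add[symmetric] power2_eq_square algebra_simps diff_divide_distrib add_divide_distrib)
    then show ?thesis unfolding std_normal_density_def normal_density_def by simp
  qed
  have "has_bochner_integral lborel (\<lambda>z. exp (c\<^sup>2 / 2) * normal_density c 1 z) (exp (c\<^sup>2 / 2) * 1)"
    by (intro has_bochner_integral_mult_right) (simp add: has_bochner_integral_iff)
  then show ?thesis by (simp add: eq)
qed

lemma gauss_sq:
  fixes s :: real
  assumes "s < 1"
  shows "has_bochner_integral lborel (\<lambda>z. std_normal_density z * exp (s * z\<^sup>2 / 2)) (1 / sqrt (1 - s))"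
proof -
  define \<tau> where "\<tau> = 1 / sqrt (1 - s)"
  have pos: "0 < 1 - s" using assms by simp
  have t2: "\<tau>\<^sup>2 = 1 / (1 - s)" using pos by (simp add: \<tau>_def power_divide)
  have eq: "std_normal_density z * exp (s * z\<^sup>2 / 2) = (1 / sqrt (1 - s)) * normal_density 0 \<tau> z" for z
  proof -
    have e: "exp (- z\<^sup>2 / 2) * exp (s * z\<^sup>2 / 2) = exp (-(z - 0)\<^sup>2 / (2 * \<tau>\<^sup>2))"
      unfolding t2 using pos by (simp add: exp_add[symmetric] field_simps)
    have "sqrt (2 * pi * \<tau>\<^sup>2) = sqrt (2 * pi) * \<tau>"
      using pos by (simp add: real_sqrt_mult \<tau>_def)
    then have "1 / sqrt (1 - s) * (1 / sqrt (2 * pi * \<tau>\<^sup>2)) = 1 / sqrt (2 * pi)"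
      using pos by (simp add: \<tau>_def)
    then show ?thesis unfolding std_normal_density_def normal_density_def e[symmetric]
      by (simp add: mult_ac)
  qed
  have tpos: "0 < \<tau>" using pos by (simp add: \<tau>_def)
  have "has_bochner_integral lborel (\<lambda>z. (1 / sqrt (1 - s)) * normal_density 0 \<tau> z) ((1 / sqrt (1 - s)) * 1)"
    by (intro has_bochner_integral_mult_right) (simp add: has_bochner_integral_iff tpos)
  then show ?thesis by (simp add: eq)
qed

lemma std_gaussian_integral:
  fixes f :: "real \<Rightarrow> real"
  assumes "f \<in> borel_measurable borel"
  shows "(\<integral>z. f z \<partial>std_gaussian) = (\<integral>z. std_normal_density z * f z \<partial>lborel)"
  unfolding std_gaussian_def
  by (subst integral_density) (use assms in auto)

lemma cosh_le_exp_sq: "cosh (y::real) \<le> exp (y\<^sup>2 / 2)"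
proof -
  define a where "a = \<bar>y\<bar>"
  have a0: "a \<ge> 0" by (simp add: a_def)
  have ca: "cosh y = cosh a"
    by (cases "y \<ge> 0") (simp_all add: a_def)
  have h: "-(2*a) * (1/2) + ln (1 + (1/2) * (exp (2*a) - 1)) \<le> (2*a)\<^sup>2 / 8"
    using Hoeffdings_lemma_aux[of "2*a" "1/2"] a0 by simp
  have "1 + (1/2) * (exp (2*a) - 1) = exp a * cosh a"
    by (simp add: cosh_def exp_minus field_simps power2_eq_square flip: exp_add)
  then have "ln (1 + (1/2) * (exp (2*a) - 1)) = a + ln (cosh a)"
    by (simp add: ln_mult)
  with h have "ln (cosh a) \<le> y\<^sup>2 / 2"
    by (simp add: a_def power2_eq_square)
  then have "exp (ln (cosh a)) \<le> exp (y\<^sup>2 / 2)" by (simp only: exp_le_cancel_iff)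
  then show ?thesis using ca by (simp only: exp_ln_iff) (metis cosh_real_ge_1 exp_ln less_le_trans zero_less_one)
qed

lemma sinh_ge_self: assumes "(y::real) \<ge> 0" shows "y \<le> sinh y"
proof -
  have "(\<lambda>x. sinh x - x) 0 \<le> (\<lambda>x. sinh x - x) y"
  proof (rule DERIV_nonneg_imp_increasing_open[OF assms])
    fix x :: real assume "0 < x" "x < y"
    show "\<exists>d. ((\<lambda>x. sinh x - x) has_real_derivative d) (at x) \<and> d \<ge> 0"
      by (intro exI conjI) (auto intro!: derivative_eq_intros simp: cosh_real_ge_1)
  next
    show "continuous_on {0..y} (\<lambda>x. sinh x - x)" by (intro continuous_intros)
  qed
  then show ?thesis by simp
qed

lemma cosh_ge_quad: "1 + (y::real)\<^sup>2 / 2 \<le> cosh y"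
proof -
  have pos: "1 + a\<^sup>2 / 2 \<le> cosh a" if "a \<ge> 0" for a :: real
  proof -
    have "(\<lambda>x. cosh x - 1 - x\<^sup>2/2) 0 \<le> (\<lambda>x. cosh x - 1 - x\<^sup>2/2) a"
    proof (rule DERIV_nonneg_imp_increasing_open[OF that])
      fix x :: real assume "0 < x" "x < a"
      then show "\<exists>d. ((\<lambda>x. cosh x - 1 - x\<^sup>2/2) has_real_derivative d) (at x) \<and> d \<ge> 0"
        by (intro exI conjI) (auto intro!: derivative_eq_intros sinh_ge_self)
    next
      show "continuous_on {0..a} (\<lambda>x. cosh x - 1 - x\<^sup>2/2)" by (intro continuous_intros) auto
    qed
    then show ?thesis by simp
  qed
  show ?thesis
  proof (cases "y \<ge> 0")
    case True then show ?thesis using pos by simp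
  next
    case False then show ?thesis using pos[of "-y"] by simp
  qed
qed

lemma sign_vectors_finite: "finite (sign_vectors n)"
  unfolding sign_vectors_def by (intro finite_PiE) auto

lemma sign_vectors_ne: "sign_vectors n \<noteq> {}"
  unfolding sign_vectors_def by (simp add: PiE_eq_empty_iff)

lemma sign_vectors_card: "card (sign_vectors n) = 2 ^ n"
  unfolding sign_vectors_def by (simp add: card_PiE) (simp add: numeral_2_eq_2)

lemma sum_sign_exp:
  fixes w :: "nat \<Rightarrow> real"
  shows "(\<Sum>x\<in>sign_vectors n. exp (\<Sum>i<n. w i * x i)) = 2 ^ n * (\<Prod>i<n. cosh (w i))"
proof -
  have "(\<Sum>x\<in>sign_vectors n. exp (\<Sum>i<n. w i * x i)) = (\<Sum>x\<in>sign_vectors n. \<Prod>i<n. exp (w i * x i))"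
    by (simp add: exp_sum)
  also have "\<dots> = (\<Prod>i<n. \<Sum>s\<in>{-1,1::real}. exp (w i * s))"
    unfolding sign_vectors_def by (subst prod_sum_PiE) auto
  also have "\<dots> = (\<Prod>i<n. 2 * cosh (w i))"
    by (intro prod.cong) (auto simp: cosh_def exp_minus)
  also have "\<dots> = 2 ^ n * (\<Prod>i<n. cosh (w i))"
    by (simp add: prod.distrib)
  finally show ?thesis .
qed

lemma hs:
  fixes u :: "nat \<Rightarrow> real" and \<sigma> :: real
  shows "has_bochner_integral lborel (\<lambda>z. std_normal_density z * (\<Prod>i<n. cosh (\<sigma> * u i * z)))
           (measure_pmf.expectation (rademacher n) (\<lambda>x. exp (\<sigma>\<^sup>2 * (\<Sum>i<n. u i * x i)\<^sup>2 / 2)))"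
proof -
  let ?V = "sign_vectors n"
  define X where "X x = (\<Sum>i<n. u i * x i)" for x :: "nat \<Rightarrow> real"
  have E: "measure_pmf.expectation (rademacher n) (\<lambda>x. exp (\<sigma>\<^sup>2 * (\<Sum>i<n. u i * x i)\<^sup>2 / 2))
        = (\<Sum>x\<in>?V. exp ((\<sigma> * X x)\<^sup>2 / 2)) / 2 ^ n"
    unfolding rademacher_def
    by (subst integral_pmf_of_set[OF sign_vectors_ne sign_vectors_finite])
       (simp add: sign_vectors_card X_def power_mult_distrib)
  have "has_bochner_integral lborel (\<lambda>z. \<Sum>x\<in>?V. std_normal_density z * exp ((\<sigma> * X x) * z))
          (\<Sum>x\<in>?V. exp ((\<sigma> * X x)\<^sup>2 / 2))"
    by (intro has_bochner_integral_sum gauss_mgf)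
  then have "has_bochner_integral lborel (\<lambda>z. (\<Sum>x\<in>?V. std_normal_density z * exp ((\<sigma> * X x) * z)) / 2 ^ n)
          ((\<Sum>x\<in>?V. exp ((\<sigma> * X x)\<^sup>2 / 2)) / 2 ^ n)"
    by (intro has_bochner_integral_divide_zero)
  moreover have "(\<Sum>x\<in>?V. std_normal_density z * exp ((\<sigma> * X x) * z)) / 2 ^ n
      = std_normal_density z * (\<Prod>i<n. cosh (\<sigma> * u i * z))" for z
  proof -
    have "(\<Sum>x\<in>?V. exp ((\<sigma> * X x) * z)) = (\<Sum>x\<in>?V. exp (\<Sum>i<n. (\<sigma> * u i * z) * x i))"
      unfolding X_def by (intro sum.cong refl arg_cong[where f=exp]) (simp add: sum_distrib_left sum_distrib_right mult_ac)
    also have "\<dots> = 2 ^ n * (\<Prod>i<n. cosh (\<sigma> * u i * z))" by (rule sum_sign_exp)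
    finally show ?thesis by (simp add: sum_distrib_left[symmetric])
  qed
  ultimately show ?thesis using E by simp
qed

definition EE :: "nat \<Rightarrow> (nat \<Rightarrow> real) \<Rightarrow> real \<Rightarrow> real" where
  "EE n u s = measure_pmf.expectation (rademacher n) (\<lambda>x. exp (s * (\<Sum>i<n. u i * x i)\<^sup>2 / 2))"

lemma finite_set_rademacher: "finite (set_pmf (rademacher n))"
  unfolding rademacher_def using sign_vectors_ne sign_vectors_finite by simp

lemma EE_upper:
  assumes u: "u \<in> unit_sphere n" and s: "\<sigma>\<^sup>2 < 1"
  shows "EE n u (\<sigma>\<^sup>2) \<le> 1 / sqrt (1 - \<sigma>\<^sup>2)"
proof -
  have h: "has_bochner_integral lborel (\<lambda>z. std_normal_density z * (\<Prod>i<n. cosh (\<sigma> * u i * z))) (EE n u (\<sigma>\<^sup>2))"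
    unfolding EE_def by (rule hs)
  have g: "has_bochner_integral lborel (\<lambda>z. std_normal_density z * exp (\<sigma>\<^sup>2 * z\<^sup>2 / 2)) (1 / sqrt (1 - \<sigma>\<^sup>2))"
    using gauss_sq[OF s] .
  have su: "(\<Sum>i<n. (u i)\<^sup>2) = 1" using u by (simp add: unit_sphere_def)
  have pw: "(\<Prod>i<n. cosh (\<sigma> * u i * z)) \<le> exp (\<sigma>\<^sup>2 * z\<^sup>2 / 2)" for z
  proof -
    have "(\<Prod>i<n. cosh (\<sigma> * u i * z)) \<le> (\<Prod>i<n. exp ((\<sigma> * u i * z)\<^sup>2 / 2))"
      by (intro prod_mono conjI cosh_real_nonneg cosh_le_exp_sq)
    also have "\<dots> = exp (\<Sum>i<n. (\<sigma> * u i * z)\<^sup>2 / 2)" by (simp add: exp_sum)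
    also have "(\<Sum>i<n. (\<sigma> * u i * z)\<^sup>2 / 2) = \<sigma>\<^sup>2 * z\<^sup>2 / 2 * (\<Sum>i<n. (u i)\<^sup>2)"
      by (simp add: sum_distrib_left power_mult_distrib mult_ac)
    finally show ?thesis using su by simp
  qed
  have "integral\<^sup>L lborel (\<lambda>z. std_normal_density z * (\<Prod>i<n. cosh (\<sigma> * u i * z)))
      \<le> integral\<^sup>L lborel (\<lambda>z. std_normal_density z * exp (\<sigma>\<^sup>2 * z\<^sup>2 / 2))"
    using h g pw by (intro integral_mono) (auto simp: has_bochner_integral_iff intro!: mult_left_mono)
  then show ?thesis using h g by (simp add: has_bochner_integral_iff)
qed

lemma gauss_int:
  assumes "\<sigma>\<^sup>2 < (1::real)"
  shows "(\<integral>z. exp (\<sigma>\<^sup>2 * z\<^sup>2 / 2) \<partial>std_gaussian) = 1 / sqrt (1 - \<sigma>\<^sup>2)"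
  using gauss_sq[OF assms] by (subst std_gaussian_integral) (auto simp: has_bochner_integral_iff)

lemma nn_eq:
  fixes t :: real assumes "t \<noteq> 0"
  shows "(\<integral>\<^sup>+ \<omega>. ennreal (exp ((\<Sum>i<n. \<omega> i * u i)\<^sup>2 / t\<^sup>2)) \<partial>measure_pmf (rademacher n))
       = ennreal (EE n u (2 / t\<^sup>2))"
proof -
  have f: "(\<lambda>\<omega>. exp ((\<Sum>i<n. \<omega> i * u i)\<^sup>2 / t\<^sup>2)) = (\<lambda>x. exp (2 / t\<^sup>2 * (\<Sum>i<n. u i * x i)\<^sup>2 / 2))"
    by (auto simp: mult_ac)
  show ?thesis unfolding EE_def f[symmetric]
    by (intro nn_integral_eq_integral integrable_measure_pmf_finite finite_set_rademacher) auto
qed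

lemma EE_mono:
  assumes "s \<le> s'"
  shows "EE n u s \<le> EE n u s'"
  unfolding EE_def
  by (intro integral_mono integrable_measure_pmf_finite finite_set_rademacher)
     (auto intro!: mult_right_mono assms)

definition psi :: "nat \<Rightarrow> (nat \<Rightarrow> real) \<Rightarrow> real" where
  "psi n u = psi2_norm (measure_pmf (rademacher n)) (\<lambda>\<omega>. \<Sum>i<n. \<omega> i * u i)"

definition LL :: real where "LL = sqrt 8 / sqrt 3"

lemma LL_sq: "LL\<^sup>2 = 8/3" unfolding LL_def by (simp add: power_divide)
lemma LL_pos: "LL > 0" unfolding LL_def by simp

lemma alpha_eq: "alpha n = Sup (psi n ` unit_sphere n)"
  unfolding alpha_def psi2_vec_norm_def psi_def ..

lemma EE_upper':
  assumes u: "u \<in> unit_sphere n" and "0 \<le> s" "s < 1"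
  shows "EE n u s \<le> 1 / sqrt (1 - s)"
  using EE_upper[OF u, of "sqrt s"] assms by simp

lemma LL_in:
  assumes u: "u \<in> unit_sphere n"
  shows "LL \<in> {t::real. t > 0 \<and> (\<integral>\<^sup>+ \<omega>. ennreal (exp (((\<lambda>\<omega>. \<Sum>i<n. \<omega> i * u i) \<omega>)\<^sup>2 / t\<^sup>2)) \<partial>measure_pmf (rademacher n)) \<le> 2}"
proof -
  have "2 / LL\<^sup>2 = 3/4" unfolding LL_sq by simp
  then have "EE n u (2 / LL\<^sup>2) \<le> 1 / sqrt (1 - 3/4)" using EE_upper'[OF u, of "3/4"] by (simp only:)
  also have "1 / sqrt (1 - 3/4) = (2::real)"
    by (simp add: real_sqrt_divide)
  finally have "EE n u (2 / LL\<^sup>2) \<le> 2" .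
  then show ?thesis using LL_pos nn_eq[of LL n u]
    by (simp add: ennreal_le_iff[symmetric] del: ennreal_le_iff)
qed

lemma psi_upper:
  assumes u: "u \<in> unit_sphere n"
  shows "psi n u \<le> LL"
  unfolding psi_def psi2_norm_def
  by (rule cInf_lower[OF LL_in[OF u]]) (auto intro!: bdd_belowI[of _ 0])

lemma psi_lower:
  assumes u: "u \<in> unit_sphere n" and t: "t > 0" and E: "EE n u (2 / t\<^sup>2) > 2"
  shows "t \<le> psi n u"
  unfolding psi_def psi2_norm_def
proof (rule cInf_greatest)
  show "{t::real. t > 0 \<and> (\<integral>\<^sup>+ \<omega>. ennreal (exp (((\<lambda>\<omega>. \<Sum>i<n. \<omega> i * u i) \<omega>)\<^sup>2 / t\<^sup>2)) \<partial>measure_pmf (rademacher n)) \<le> 2} \<noteq> {}"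
    using LL_in[OF u] by blast
next
  fix s assume "s \<in> {t::real. t > 0 \<and> (\<integral>\<^sup>+ \<omega>. ennreal (exp (((\<lambda>\<omega>. \<Sum>i<n. \<omega> i * u i) \<omega>)\<^sup>2 / t\<^sup>2)) \<partial>measure_pmf (rademacher n)) \<le> 2}"
  then have s: "s > 0" and le: "ennreal (EE n u (2 / s\<^sup>2)) \<le> 2" using nn_eq[of s n u] by auto
  have le2: "EE n u (2 / s\<^sup>2) \<le> 2"
    using le by (simp add: ennreal_le_iff[symmetric] del: ennreal_le_iff)
  show "t \<le> s"
  proof (rule ccontr)
    assume "\<not> t \<le> s"
    then have "s < t" by simp
    then have "s\<^sup>2 \<le> t\<^sup>2" using s by (intro power_mono) auto
    then have "2 / t\<^sup>2 \<le> 2 / s\<^sup>2" using s \<open>s < t\<close> by (intro divide_left_mono) auto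
    then have "EE n u (2 / t\<^sup>2) \<le> EE n u (2 / s\<^sup>2)" by (rule EE_mono)
    then show False using E le2 by simp
  qed
qed

lemma alpha_upper:
  assumes "m \<ge> 1" shows "alpha m \<le> LL"
proof -
  define u0 where "u0 = (\<lambda>i. if i < m then 1 / sqrt (real m) else undefined)"
  have "u0 \<in> unit_sphere m"
    using assms by (auto simp: unit_sphere_def u0_def PiE_iff extensional_def power_divide)
  then show ?thesis unfolding alpha_eq
    by (intro cSup_least) (auto intro: psi_upper)
qed

lemma conv_lim:
  fixes s :: real assumes s: "0 \<le> s" "s < 1"
  shows "(\<lambda>m. \<integral>z. std_normal_density z * (1 + (s * z\<^sup>2 / 2) / real m) ^ m \<partial>lborel)
           \<longlonglongrightarrow> 1 / sqrt (1 - s)"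
proof -
  have g: "has_bochner_integral lborel (\<lambda>z. std_normal_density z * exp (s * z\<^sup>2 / 2)) (1 / sqrt (1 - s))"
    using gauss_sq[OF s(2)] .
  have bnd: "(1 + x / real m) ^ m \<le> exp x" if "x \<ge> 0" for x :: real and m
  proof (cases "m = 0")
    case True then show ?thesis using that by simp
  next
    case False then show ?thesis using that exp_ge_one_plus_x_over_n_power_n[where x=x and n=m] by simp
  qed
  have "(\<lambda>m. \<integral>z. std_normal_density z * (1 + (s * z\<^sup>2 / 2) / real m) ^ m \<partial>lborel)
           \<longlonglongrightarrow> (\<integral>z. std_normal_density z * exp (s * z\<^sup>2 / 2) \<partial>lborel)"
  proof (rule integral_dominated_convergence[where w = "\<lambda>z. std_normal_density z * exp (s * z\<^sup>2 / 2)"])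
    show "integrable lborel (\<lambda>z. std_normal_density z * exp (s * z\<^sup>2 / 2))"
      using g by (simp add: has_bochner_integral_iff)
    show "AE z in lborel. (\<lambda>m. std_normal_density z * (1 + (s * z\<^sup>2 / 2) / real m) ^ m)
            \<longlonglongrightarrow> std_normal_density z * exp (s * z\<^sup>2 / 2)"
      by (intro AE_I2 tendsto_mult_left tendsto_exp_limit_sequentially)
    show "AE z in lborel. norm (std_normal_density z * (1 + (s * z\<^sup>2 / 2) / real m) ^ m)
            \<le> std_normal_density z * exp (s * z\<^sup>2 / 2)" for m
    proof (intro AE_I2)
      fix z :: real
      have x0: "s * z\<^sup>2 / 2 \<ge> 0" using s by simp
      then have "0 \<le> (1 + (s * z\<^sup>2 / 2) / real m) ^ m" by simp
      then show "norm (std_normal_density z * (1 + (s * z\<^sup>2 / 2) / real m) ^ m)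
            \<le> std_normal_density z * exp (s * z\<^sup>2 / 2)"
        using bnd[OF x0, of m] by (auto simp: abs_mult intro!: mult_left_mono)
    qed
  qed auto
  then show ?thesis using g by (simp add: has_bochner_integral_iff)
qed

lemma EE_lower:
  fixes s :: real and m :: nat assumes s: "0 \<le> s" "s < 1" and m: "m \<ge> 1"
  defines "u0 \<equiv> (\<lambda>i. if i < m then 1 / sqrt (real m) else undefined)"
  shows "(\<integral>z. std_normal_density z * (1 + (s * z\<^sup>2 / 2) / real m) ^ m \<partial>lborel) \<le> EE m u0 s"
proof -
  have h: "has_bochner_integral lborel (\<lambda>z. std_normal_density z * (\<Prod>i<m. cosh (sqrt s * u0 i * z))) (EE m u0 s)"
    using hs[where \<sigma>="sqrt s" and n=m and u=u0] s unfolding EE_def by simp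
  have g: "has_bochner_integral lborel (\<lambda>z. std_normal_density z * exp (s * z\<^sup>2 / 2)) (1 / sqrt (1 - s))"
    using gauss_sq[OF s(2)] .
  have bnd: "(1 + x / real m) ^ m \<le> exp x" if "x \<ge> 0" for x :: real
    using that exp_ge_one_plus_x_over_n_power_n[where x=x and n=m] m by simp
  have int2: "integrable lborel (\<lambda>z. std_normal_density z * (1 + (s * z\<^sup>2 / 2) / real m) ^ m)"
  proof (rule Bochner_Integration.integrable_bound)
    show "integrable lborel (\<lambda>z. std_normal_density z * exp (s * z\<^sup>2 / 2))"
      using g by (simp add: has_bochner_integral_iff)
    show "AE z in lborel. norm (std_normal_density z * (1 + (s * z\<^sup>2 / 2) / real m) ^ m)
            \<le> norm (std_normal_density z * exp (s * z\<^sup>2 / 2))"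
    proof (intro AE_I2)
      fix z :: real
      have x0: "s * z\<^sup>2 / 2 \<ge> 0" using s by simp
      then have "0 \<le> (1 + (s * z\<^sup>2 / 2) / real m) ^ m" by simp
      then show "norm (std_normal_density z * (1 + (s * z\<^sup>2 / 2) / real m) ^ m)
            \<le> norm (std_normal_density z * exp (s * z\<^sup>2 / 2))"
        using bnd[OF x0] by (auto simp: abs_mult intro!: mult_left_mono)
    qed
  qed auto
  have pw: "(1 + (s * z\<^sup>2 / 2) / real m) ^ m \<le> (\<Prod>i<m. cosh (sqrt s * u0 i * z))" for z
  proof -
    have "(\<Prod>i<m. cosh (sqrt s * u0 i * z)) = cosh (sqrt s * (1 / sqrt (real m)) * z) ^ m"
      unfolding u0_def by simp
    moreover have "(1 + (s * z\<^sup>2 / 2) / real m) = 1 + (sqrt s * (1 / sqrt (real m)) * z)\<^sup>2 / 2"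
      using s m by (simp add: power_mult_distrib power_divide)
    moreover have "0 \<le> 1 + (s * z\<^sup>2 / 2) / real m" using s by simp
    ultimately show ?thesis by (metis cosh_ge_quad power_mono)
  qed
  have "(\<integral>z. std_normal_density z * (1 + (s * z\<^sup>2 / 2) / real m) ^ m \<partial>lborel)
      \<le> (\<integral>z. std_normal_density z * (\<Prod>i<m. cosh (sqrt s * u0 i * z)) \<partial>lborel)"
    by (rule integral_mono[OF int2]) (use h pw in \<open>auto simp: has_bochner_integral_iff intro!: mult_left_mono\<close>)
  then show ?thesis using h by (simp add: has_bochner_integral_iff)
qed

lemma u0_sphere:
  assumes "m \<ge> 1"
  shows "(\<lambda>i. if i < m then 1 / sqrt (real m) else undefined) \<in> unit_sphere m"
  using assms by (auto simp: unit_sphere_def PiE_iff extensional_def power_divide)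

lemma alpha_ge_psi:
  assumes "u \<in> unit_sphere m" shows "psi m u \<le> alpha m"
  unfolding alpha_eq
  by (rule cSup_upper) (use assms psi_upper in \<open>auto intro!: bdd_aboveI[of _ LL]\<close>)

lemma alpha_lim: "alpha \<longlonglongrightarrow> LL"
proof (rule order_tendstoI)
  fix b assume b: "LL < b"
  show "\<forall>\<^sub>F m in sequentially. alpha m < b"
    using eventually_ge_at_top[of "1::nat"] by eventually_elim (use alpha_upper b in force)
next
  fix a assume a: "a < LL"
  have LLs: "LL = sqrt (8/3)" unfolding LL_def by (simp add: real_sqrt_divide)
  have s2: "sqrt 2 < LL" unfolding LLs by simp
  define t where "t = (max a (sqrt 2) + LL) / 2"
  have ta: "a < t" and t2: "sqrt 2 < t" and tL: "t < LL" using a s2 by (auto simp: t_def)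
  have tpos: "t > 0" using t2 by (smt (verit) real_sqrt_ge_zero)
  have "(sqrt 2)\<^sup>2 < t\<^sup>2" using t2 by (intro power_strict_mono) auto
  then have tsq1: "2 < t\<^sup>2" by simp
  have "t\<^sup>2 < LL\<^sup>2" using tL tpos by (intro power_strict_mono) auto
  then have tsq2: "t\<^sup>2 < 8/3" using LL_sq by simp
  define s where "s = 2 / t\<^sup>2"
  have s0: "0 \<le> s" and s1: "s < 1" using tsq1 by (auto simp: s_def divide_less_eq)
  have s34: "3/4 < s" using tsq2 tsq1 tpos by (simp add: s_def field_simps less_divide_eq)
  have "sqrt (1 - s) < sqrt (1/4)" using s34 by simp
  then have "sqrt (1 - s) < 1/2" by (simp add: real_sqrt_divide)
  moreover have "0 < sqrt (1 - s)" using s1 by simp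
  ultimately have lim2: "2 < 1 / sqrt (1 - s)" by (simp add: field_simps)
  have ev: "\<forall>\<^sub>F m in sequentially. 2 < (\<integral>z. std_normal_density z * (1 + (s * z\<^sup>2 / 2) / real m) ^ m \<partial>lborel)"
    using order_tendstoD(1)[OF conv_lim[OF s0 s1] lim2] .
  show "\<forall>\<^sub>F m in sequentially. a < alpha m"
    using ev eventually_ge_at_top[of 1]
  proof eventually_elim
    case (elim m)
    define u0 where "u0 = (\<lambda>i. if i < m then 1 / sqrt (real m) else undefined)"
    have u0: "u0 \<in> unit_sphere m" unfolding u0_def using u0_sphere elim by simp
    have "2 < EE m u0 s" using EE_lower[OF s0 s1 elim(2)] elim(1) unfolding u0_def by simp
    then have "t \<le> psi m u0" using psi_lower[OF u0 tpos] by (simp add: s_def)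
    also have "\<dots> \<le> alpha m" by (rule alpha_ge_psi[OF u0])
    finally show ?case using ta by simp
  qed
qed

theorem theoremB1:
  fixes n :: nat and u :: "nat \<Rightarrow> real" and \<sigma> :: real
  assumes u: "u \<in> unit_sphere n"
    and \<sigma>: "0 < \<sigma>" "\<sigma> < 1"
  shows "measure_pmf.expectation (rademacher n)
            (\<lambda>x. exp (\<sigma>\<^sup>2 * (\<Sum>i<n. u i * x i)\<^sup>2 / 2))
          \<le> (\<integral>z. exp (\<sigma>\<^sup>2 * z\<^sup>2 / 2) \<partial>std_gaussian)
       \<and> (\<integral>z. exp (\<sigma>\<^sup>2 * z\<^sup>2 / 2) \<partial>std_gaussian) = 1 / sqrt (1 - \<sigma>\<^sup>2)
       \<and> (\<forall>m\<ge>1. alpha m \<le> sqrt 8 / sqrt 3)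
       \<and> alpha \<longlonglongrightarrow> sqrt 8 / sqrt 3"
proof -
  have s: "\<sigma>\<^sup>2 < 1" using \<sigma> by (simp add: power_less_one_iff abs_less_iff)
  have g: "(\<integral>z. exp (\<sigma>\<^sup>2 * z\<^sup>2 / 2) \<partial>std_gaussian) = 1 / sqrt (1 - \<sigma>\<^sup>2)"
    by (rule gauss_int[OF s])
  have e: "measure_pmf.expectation (rademacher n) (\<lambda>x. exp (\<sigma>\<^sup>2 * (\<Sum>i<n. u i * x i)\<^sup>2 / 2))
      \<le> 1 / sqrt (1 - \<sigma>\<^sup>2)"
    using EE_upper[OF u s] unfolding EE_def .
  show ?thesis using g e alpha_upper alpha_lim unfolding LL_def by simp
qed

end
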